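(* Fix $n\geq 5$ and let $r>0$. Consider the $n\times n$ symmetric matrices $P=[p_{ij}]$ with $p_{ii}=x_i\geq 0$ ($1\le i\le n$), $p_{i,i+2}=p_{i+2,i}=y_i\geq 0$ ($1\le i\le n-2$), and all other entries (in particular $p_{i,i+1}=p_{i+1,i}$) equal to $0$. Then $P^{\circ r}$ is positive definite for every positive definite such $P$ if and only if $r\geq 1$; likewise, $P^{\circ r}$ is positive semidefinite for every positive semidefinite such $P$ if and only if $r\geq 1$.
   Context: For a nonnegative matrix $A=[a_{ij}]$ and $r>0$, the Hadamard power is $A^{\circ r}=[a_{ij}^r]$. Positive (semi)definite matrices are required to be symmetric. *)

theory Defs
  imports Complex_Main
begin

(* n x n real matrices are represented as functions nat => nat => real,
   only entries with indices < n matter (0-based indexing). *)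

definition sym_mat :: "nat \<Rightarrow> (nat \<Rightarrow> nat \<Rightarrow> real) \<Rightarrow> bool" where
  "sym_mat n A \<longleftrightarrow> (\<forall>i<n. \<forall>j<n. A i j = A j i)"

definition quad_form :: "nat \<Rightarrow> (nat \<Rightarrow> nat \<Rightarrow> real) \<Rightarrow> (nat \<Rightarrow> real) \<Rightarrow> real" where
  "quad_form n A v = (\<Sum>i<n. \<Sum>j<n. v i * A i j * v j)"

definition pos_def :: "nat \<Rightarrow> (nat \<Rightarrow> nat \<Rightarrow> real) \<Rightarrow> bool" where
  "pos_def n A \<longleftrightarrow> sym_mat n A \<and> (\<forall>v. (\<exists>i<n. v i \<noteq> 0) \<longrightarrow> quad_form n A v > 0)"

definition pos_semidef :: "nat \<Rightarrow> (nat \<Rightarrow> nat \<Rightarrow> real) \<Rightarrow> bool" where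
  "pos_semidef n A \<longleftrightarrow> sym_mat n A \<and> (\<forall>v. quad_form n A v \<ge> 0)"

(* Hadamard power; entries are nonnegative, and 0 powr r = 0 = 0^r for r > 0 *)
definition hadamard_pow :: "(nat \<Rightarrow> nat \<Rightarrow> real) \<Rightarrow> real \<Rightarrow> (nat \<Rightarrow> nat \<Rightarrow> real)" where
  "hadamard_pow A r = (\<lambda>i j. A i j powr r)"

definition gap2_mat :: "nat \<Rightarrow> (nat \<Rightarrow> nat \<Rightarrow> real) \<Rightarrow> bool" where
  "gap2_mat n P \<longleftrightarrow>
     (\<exists>x y :: nat \<Rightarrow> real. (\<forall>i<n. x i \<ge> 0) \<and> (\<forall>i. i + 2 < n \<longrightarrow> y i \<ge> 0) \<and>
        (\<forall>i<n. \<forall>j<n. P i j =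
           (if i = j then x i else if j = i + 2 then y i else if i = j + 2 then y j else 0)))"

end

theory Submission
  imports Defs
begin

definition gm :: "(nat \<Rightarrow> real) \<Rightarrow> (nat \<Rightarrow> real) \<Rightarrow> nat \<Rightarrow> nat \<Rightarrow> real" where
  "gm x y i j = (if i = j then x i else if j = i + 2 then y i else if i = j + 2 then y j else 0)"

fun cc :: "(nat \<Rightarrow> real) \<Rightarrow> (nat \<Rightarrow> real) \<Rightarrow> nat \<Rightarrow> real" where
  "cc x y 0 = x 0"
| "cc x y (Suc 0) = x 1"
| "cc x y (Suc (Suc i)) = x (Suc (Suc i)) - (y i)^2 / cc x y i"

fun Q :: "(nat \<Rightarrow> real) \<Rightarrow> (nat \<Rightarrow> real) \<Rightarrow> (nat \<Rightarrow> real) \<Rightarrow> nat \<Rightarrow> real" where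
  "Q x y v 0 = 0"
| "Q x y v (Suc m) = Q x y v m + x m * (v m)^2 + (if m \<ge> 2 then 2 * y (m-2) * v (m-2) * v m else 0)"

definition T :: "(nat \<Rightarrow> real) \<Rightarrow> (nat \<Rightarrow> real) \<Rightarrow> (nat \<Rightarrow> real) \<Rightarrow> nat \<Rightarrow> real" where
  "T x y v i = cc x y i * (v i)^2 + 2 * y i * v i * v (i+2) + (y i)^2 / cc x y i * (v (i+2))^2"

lemma sum_if_col: "(\<Sum>i<m. (if m = Suc (Suc i) then g i else (0::real))) = (if (m::nat) \<ge> 2 then g (m-2) else 0)"
proof (cases "m \<ge> 2")
  case True
  have "(\<Sum>i<m. (if m = Suc (Suc i) then g i else (0::real))) = (\<Sum>i<m. (if i = m - 2 then g i else 0))"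
    using True by (intro sum.cong) auto
  also have "\<dots> = g (m-2)" using True by (simp add: sum.delta)
  finally show ?thesis using True by simp
next
  case False
  then show ?thesis by (intro trans[OF sum.neutral]) auto
qed

lemma quad_Q: "quad_form m (gm x y) v = Q x y v m"
proof (induction m)
  case 0
  then show ?case by (simp add: quad_form_def)
next
  case (Suc m)
  have "quad_form (Suc m) (gm x y) v = quad_form m (gm x y) v
      + (\<Sum>i<m. v i * gm x y i m * v m) + (\<Sum>j<m. v m * gm x y m j * v j) + v m * gm x y m m * v m"
    by (simp add: quad_form_def sum.distrib)
  also have "(\<Sum>i<m. v i * gm x y i m * v m) = (\<Sum>i<m. (if m = i + 2 then v i * y i * v m else 0))"
    by (rule sum.cong) (auto simp: gm_def)
  also have "(\<Sum>j<m. v m * gm x y m j * v j) = (\<Sum>i<m. (if m = i + 2 then v i * y i * v m else 0))"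
    by (rule sum.cong) (auto simp: gm_def)
  finally show ?case using Suc by (simp add: sum_if_col gm_def power2_eq_square)
qed

lemma Q_decomp: "Q x y v (Suc (Suc k)) = (\<Sum>i<k. T x y v i) + cc x y k * (v k)^2 + cc x y (Suc k) * (v (Suc k))^2"
proof (induction k)
  case 0
  then show ?case by simp
next
  case (Suc k)
  show ?case
  proof (cases "cc x y k = 0")
    case True
    then show ?thesis using Suc by (simp add: T_def algebra_simps)
  next
    case False
    then show ?thesis using Suc by (simp add: T_def field_simps power2_eq_square)
  qed
qed

lemma Q_local: "(\<forall>j<m. v j = w j) \<Longrightarrow> Q x y v m = Q x y w m"
  by (induction m) auto

lemma Q_zero_tail: assumes "\<forall>j\<ge>m. v j = 0" "m \<le> p" shows "Q x y v p = Q x y v m"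
  using assms(2) proof (induction p rule: dec_induct)
  case base
  then show ?case by simp
next
  case (step p)
  then show ?case using assms(1) by auto
qed

lemma T_nonneg: "cc x y i \<ge> 0 \<Longrightarrow> (cc x y i = 0 \<longrightarrow> y i = 0) \<Longrightarrow> T x y v i \<ge> 0"
proof (cases "cc x y i = 0")
  case True
  assume "cc x y i = 0 \<longrightarrow> y i = 0"
  then show ?thesis using True by (simp add: T_def)
next
  case False
  assume "cc x y i \<ge> 0"
  then have c: "cc x y i > 0" using False by simp
  have "T x y v i = cc x y i * (v i + y i / cc x y i * v (i+2))^2"
    using False by (simp add: T_def field_simps power2_eq_square)
  then show ?thesis using c by simp
qed


fun hv :: "(nat \<Rightarrow> real) \<Rightarrow> (nat \<Rightarrow> real) \<Rightarrow> nat \<Rightarrow> nat \<Rightarrow> real" where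
  "hv x y k 0 = 1"
| "hv x y k (Suc 0) = 0"
| "hv x y k (Suc (Suc d)) = - (y (k - Suc (Suc d)) / cc x y (k - Suc (Suc d))) * hv x y k d"

definition tv :: "(nat \<Rightarrow> real) \<Rightarrow> (nat \<Rightarrow> real) \<Rightarrow> nat \<Rightarrow> nat \<Rightarrow> real" where
  "tv x y k j = (if j \<le> k then hv x y k (k - j) else 0)"

lemma tv_rec: "j + 2 \<le> k \<Longrightarrow> tv x y k j = - (y j / cc x y j) * tv x y k (j+2)"
proof -
  assume a: "j + 2 \<le> k"
  define d where "d = k - (j+2)"
  have e: "k - j = Suc (Suc d)" "k - Suc (Suc d) = j" "k - (j+2) = d" using a by (auto simp: d_def)
  have "tv x y k j = hv x y k (Suc (Suc d))" using a e by (simp add: tv_def)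
  also have "\<dots> = - (y (k - Suc (Suc d)) / cc x y (k - Suc (Suc d))) * hv x y k d"
    by (rule hv.simps(3))
  also have "\<dots> = - (y j / cc x y j) * hv x y k d" by (simp only: e)
  finally show ?thesis using a e by (simp add: tv_def)
qed

lemma tv_k: "tv x y k k = 1" by (simp add: tv_def)
lemma tv_km1: "tv x y k (Suc j) = 0 \<Longrightarrow> True" by simp
lemma tv_big: "j > k \<Longrightarrow> tv x y k j = 0" by (simp add: tv_def)
lemma tv_pred: "Suc j = k \<Longrightarrow> tv x y k j = 0" by (auto simp: tv_def)

lemma T_tv_zero:
  assumes h: "\<forall>i. i + 2 \<le> k \<longrightarrow> cc x y i \<noteq> 0 \<or> y i = 0" and i: "i < k"
  shows "T x y (tv x y k) i = 0"
proof (cases "i + 2 \<le> k")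
  case True
  have r: "tv x y k i = - (y i / cc x y i) * tv x y k (i+2)" using tv_rec[OF True] .
  show ?thesis
  proof (cases "cc x y i = 0")
    case True
    then have "y i = 0" using h \<open>i + 2 \<le> k\<close> by auto
    then show ?thesis using r by (simp add: T_def)
  next
    case False
    then show ?thesis unfolding T_def r by (simp add: field_simps power2_eq_square)
  qed
next
  case False
  then have "Suc i = k" using i by simp
  then show ?thesis by (simp add: T_def tv_pred tv_big)
qed

lemma Q_tv:
  assumes h: "\<forall>i. i + 2 \<le> k \<longrightarrow> cc x y i \<noteq> 0 \<or> y i = 0" and p: "Suc k \<le> p"
  shows "Q x y (tv x y k) p = cc x y k"
proof -
  have z: "\<forall>j\<ge>Suc k. tv x y k j = 0" by (simp add: tv_def)
  have "Q x y (tv x y k) p = Q x y (tv x y k) (Suc k)" using Q_zero_tail[OF z p] .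
  also have "\<dots> = Q x y (tv x y k) (Suc (Suc k))" using Q_zero_tail[OF z, of "Suc (Suc k)"] by simp
  also have "\<dots> = (\<Sum>i<k. T x y (tv x y k) i) + cc x y k" 
    unfolding Q_decomp by (simp add: tv_k tv_big)
  also have "(\<Sum>i<k. T x y (tv x y k) i) = 0"
    using T_tv_zero[OF h] by simp
  finally show ?thesis by simp
qed

definition psd_cond where
  "psd_cond n x y \<longleftrightarrow> (\<forall>k<n. cc x y k \<ge> 0 \<and> (k + 2 < n \<longrightarrow> cc x y k = 0 \<longrightarrow> y k = 0))"

definition pd_cond where
  "pd_cond n x y \<longleftrightarrow> (\<forall>k<n. cc x y k > 0)"

lemma psd_suff:
  assumes "n \<ge> 2" "psd_cond n x y" shows "Q x y v n \<ge> 0"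
proof -
  obtain k where k: "n = Suc (Suc k)" using assms(1) by (metis add_2_eq_Suc le_Suc_ex)
  have "(\<Sum>i<k. T x y v i) \<ge> 0"
    using assms(2) k by (intro sum_nonneg T_nonneg) (auto simp: psd_cond_def)
  moreover have "cc x y k \<ge> 0" "cc x y (Suc k) \<ge> 0" using assms(2) k by (auto simp: psd_cond_def)
  ultimately show ?thesis unfolding k Q_decomp by simp
qed

lemma pd_suff:
  assumes "n \<ge> 2" "pd_cond n x y" "\<exists>i<n. v i \<noteq> 0" shows "Q x y v n > 0"
proof -
  obtain k where k: "n = Suc (Suc k)" using assms(1) by (metis add_2_eq_Suc le_Suc_ex)
  define S where "S = {i. i < n \<and> v i \<noteq> 0}"
  have fS: "finite S" "S \<noteq> {}" using assms(3) by (auto simp: S_def)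
  define j where "j = Max S"
  have jS: "j < n" "v j \<noteq> 0" using Max_in[OF fS] by (auto simp: S_def j_def)
  have jmax: "\<And>i. i < n \<Longrightarrow> i > j \<Longrightarrow> v i = 0"
    using Max_ge[OF fS(1)] j_def S_def by fastforce
  have pc: "psd_cond n x y" using assms(2) by (auto simp: psd_cond_def pd_cond_def less_imp_le)
  have Tn: "\<And>i. i < k \<Longrightarrow> T x y v i \<ge> 0"
    using pc k by (intro T_nonneg) (auto simp: psd_cond_def)
  have c1: "cc x y k \<ge> 0" "cc x y (Suc k) \<ge> 0" using pc k by (auto simp: psd_cond_def)
  have sn: "(\<Sum>i<k. T x y v i) \<ge> 0" using Tn by (intro sum_nonneg) auto
  have pos2: "cc x y j * (v j)^2 > 0" using assms(2) jS by (simp add: pd_cond_def)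
  show ?thesis
  proof (cases "j < k")
    case True
    have cj: "cc x y j > 0" using assms(2) jS by (simp add: pd_cond_def)
    have "v (j+2) = 0" using jmax True k by simp
    then have Tj: "T x y v j = cc x y j * (v j)^2" using cj by (simp add: T_def)
    have "T x y v j \<le> (\<Sum>i<k. T x y v i)"
      using True Tn by (intro member_le_sum) auto
    then have "(\<Sum>i<k. T x y v i) > 0" using Tj pos2 by simp
    then show ?thesis using c1 unfolding k Q_decomp by (simp add: add_pos_nonneg)
  next
    case False
    then have "j = k \<or> j = Suc k" using jS k by auto
    then show ?thesis
    proof
      assume "j = k"
      then show ?thesis using k c1 sn pos2 unfolding k Q_decomp
        by (simp add: add_pos_nonneg add_nonneg_pos)
    next
      assume "j = Suc k"
      then show ?thesis using k c1 sn pos2 unfolding k Q_decomp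
        by (simp add: add_pos_nonneg add_nonneg_pos)
    qed
  qed
qed


lemma quad_aux:
  fixes a b :: real
  assumes "\<forall>t. 0 \<le> a * t^2 - 2 * b * t" shows "b = 0"
proof (rule ccontr)
  assume nb: "b \<noteq> 0"
  define X where "X = \<bar>a\<bar> + 1"
  have X: "X > 0" "a / X < 1" by (auto simp: X_def divide_less_eq)
  have e: "0 \<le> a * (b/X)^2 - 2 * b * (b/X)" using assms by blast
  have e2: "a * (b/X)^2 - 2 * b * (b/X) = (b^2 / X) * (a / X - 2)" using X by (simp add: field_simps power2_eq_square)
  have neg: "a / X - 2 < 0" using X(2) by linarith
  have pos: "b^2 / X > 0" using X nb by simp
  have "(b^2 / X) * (a / X - 2) < 0" using pos neg by (rule mult_pos_neg)
  then show False using e e2 by linarith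
qed

lemma psd_nec:
  assumes "\<forall>v. Q x y v n \<ge> 0" shows "psd_cond n x y"
proof -
  have "\<forall>k. k < n \<longrightarrow> cc x y k \<ge> 0 \<and> (k + 2 < n \<longrightarrow> cc x y k = 0 \<longrightarrow> y k = 0)"
  proof (intro allI)
    fix k show "k < n \<longrightarrow> cc x y k \<ge> 0 \<and> (k + 2 < n \<longrightarrow> cc x y k = 0 \<longrightarrow> y k = 0)"
    proof (induction k rule: less_induct)
      case (less k)
      show ?case
      proof
        assume kn: "k < n"
        have h: "\<forall>i. i + 2 \<le> k \<longrightarrow> cc x y i \<noteq> 0 \<or> y i = 0"
          using less kn by force
        have ck: "Q x y (tv x y k) n = cc x y k" using Q_tv[OF h] kn by simp
        have c1: "cc x y k \<ge> 0" using assms ck by metis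
        have c2: "y k = 0" if k2: "k + 2 < n" and c0: "cc x y k = 0"
        proof -
          have "\<forall>t. 0 \<le> x (Suc (Suc k)) * t^2 - 2 * y k * t"
          proof
            fix t
            define w where "w = (tv x y k)(Suc (Suc k) := - t)"
            have z: "\<forall>j\<ge>Suc (Suc (Suc k)). w j = 0" by (simp add: w_def tv_def)
            have "Q x y w n = Q x y w (Suc (Suc (Suc k)))" using Q_zero_tail[OF z] k2 by simp
            also have "\<dots> = Q x y w (Suc (Suc k)) + x (Suc (Suc k)) * t^2 - 2 * y k * t"
              by (simp add: w_def tv_def)
            also have "Q x y w (Suc (Suc k)) = Q x y (tv x y k) (Suc (Suc k))"
              by (rule Q_local) (simp add: w_def)
            also have "\<dots> = 0" using Q_tv[OF h, of "Suc (Suc k)"] c0 by simp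
            finally show "0 \<le> x (Suc (Suc k)) * t^2 - 2 * y k * t" using assms by (metis add_0)
          qed
          then show ?thesis by (rule quad_aux)
        qed
        show "cc x y k \<ge> 0 \<and> (k + 2 < n \<longrightarrow> cc x y k = 0 \<longrightarrow> y k = 0)" using c1 c2 by blast
      qed
    qed
  qed
  then show ?thesis by (simp add: psd_cond_def)
qed

lemma Q_zero_vec: "(\<forall>i<n. v i = 0) \<Longrightarrow> Q x y v n = 0"
proof -
  assume "\<forall>i<n. v i = 0"
  then have "Q x y v n = Q x y (\<lambda>_. 0) n" by (intro Q_local) auto
  also have "\<dots> = 0" by (induction n) auto
  finally show ?thesis .
qed

lemma pd_nec:
  assumes "\<forall>v. (\<exists>i<n. v i \<noteq> 0) \<longrightarrow> Q x y v n > 0" shows "pd_cond n x y"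
proof -
  have "\<forall>v. Q x y v n \<ge> 0"
  proof
    fix v show "Q x y v n \<ge> 0"
      using assms Q_zero_vec[of n v x y] by (cases "\<exists>i<n. v i \<noteq> 0") (auto intro: less_imp_le)
  qed
  then have pc: "psd_cond n x y" by (rule psd_nec)
  show ?thesis unfolding pd_cond_def
  proof (intro allI impI)
    fix k assume kn: "k < n"
    have h: "\<forall>i. i + 2 \<le> k \<longrightarrow> cc x y i \<noteq> 0 \<or> y i = 0"
      using pc kn unfolding psd_cond_def by force
    have ck: "Q x y (tv x y k) n = cc x y k" using Q_tv[OF h] kn by simp
    have "\<exists>i<n. tv x y k i \<noteq> 0" using kn tv_k[of x y k] by auto
    then show "cc x y k > 0" using assms ck by metis
  qed
qed

lemma sym_gm: "sym_mat n (gm x y)" by (auto simp: sym_mat_def gm_def)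

lemma psd_char: "n \<ge> 2 \<Longrightarrow> pos_semidef n (gm x y) \<longleftrightarrow> psd_cond n x y"
  unfolding pos_semidef_def quad_Q using sym_gm psd_nec psd_suff by blast

lemma pd_char: "n \<ge> 2 \<Longrightarrow> pos_def n (gm x y) \<longleftrightarrow> pd_cond n x y"
  unfolding pos_def_def quad_Q using sym_gm pd_nec pd_suff by meson


lemma superadd:
  fixes a b r :: real
  assumes a: "a \<ge> 0" and b: "b \<ge> 0" and r: "r \<ge> 1"
  shows "a powr r + b powr r \<le> (a + b) powr r"
proof (cases "a + b = 0")
  case True
  then have "a = 0" "b = 0" using a b by auto
  then show ?thesis by simp
next
  case False
  define s where "s = a + b"
  have s: "s > 0" using False a b by (simp add: s_def)
  have ha: "a powr r \<le> s powr r * (a / s)"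
  proof -
    have "a = s * (a / s)" using s by simp
    then have "a powr r = s powr r * (a / s) powr r" by (metis powr_mult)
    also have "(a / s) powr r \<le> (a / s) powr 1"
      using a b s r by (intro powr_mono') (auto simp: s_def)
    also have "(a / s) powr 1 = a / s" using a s by simp
    finally show ?thesis using s by (simp add: mult_left_mono)
  qed
  have hb: "b powr r \<le> s powr r * (b / s)"
  proof -
    have "b = s * (b / s)" using s by simp
    then have "b powr r = s powr r * (b / s) powr r" by (metis powr_mult)
    also have "(b / s) powr r \<le> (b / s) powr 1"
      using a b s r by (intro powr_mono') (auto simp: s_def)
    also have "(b / s) powr 1 = b / s" using b s by simp
    finally show ?thesis using s by (simp add: mult_left_mono)
  qed
  have "s powr r * (a / s) + s powr r * (b / s) = s powr r"
    using s by (simp add: s_def add_divide_distrib[symmetric] distrib_left[symmetric])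
  then have "a powr r + b powr r \<le> s powr r" using ha hb by linarith
  then show ?thesis by (simp add: s_def)
qed

lemma cc_pow:
  assumes r: "r \<ge> 1" and pc: "psd_cond n x y" and xn: "\<forall>i<n. x i \<ge> 0"
    and yn: "\<forall>i. i + 2 < n \<longrightarrow> y i \<ge> 0"
  shows "k < n \<Longrightarrow> cc (\<lambda>i. x i powr r) (\<lambda>i. y i powr r) k \<ge> cc x y k powr r"
proof (induction k rule: less_induct)
  case (less k)
  define xr where "xr = (\<lambda>i. x i powr r)"
  define yr where "yr = (\<lambda>i. y i powr r)"
  show ?case
  proof (cases k)
    case 0 then show ?thesis by simp
  next
    case (Suc k') note k' = this
    show ?thesis
    proof (cases k')
      case 0 then show ?thesis using k' by simp
    next
      case (Suc i)
      have k: "k = Suc (Suc i)" using k' Suc by simp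
      have IH: "cc xr yr i \<ge> cc x y i powr r" using less k unfolding xr_def yr_def by simp
      have ci: "cc x y i \<ge> 0" using pc less(2) k by (simp add: psd_cond_def)
      have ck: "cc x y k \<ge> 0" using pc less(2) unfolding psd_cond_def by blast
      have yi: "y i \<ge> 0" using yn less(2) k by simp
      show ?thesis
      proof (cases "cc x y i = 0")
        case True
        then have "y i = 0" using pc less(2) k by (simp add: psd_cond_def)
        then show ?thesis using k True by simp
      next
        case False
        then have cip: "cc x y i > 0" using ci by simp
        then have cir: "cc x y i powr r > 0" by simp
        have cri: "cc xr yr i > 0" using IH cir by linarith
        define \<beta> where "\<beta> = (y i)^2 / cc x y i"
        have \<beta>: "\<beta> \<ge> 0" using cip by (simp add: \<beta>_def)
        have Y: "(yr i)^2 / cc xr yr i \<le> (yr i)^2 / cc x y i powr r"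
          using IH cir cri by (intro divide_left_mono) auto
        have Yb: "(yr i)^2 / cc x y i powr r = \<beta> powr r"
          unfolding \<beta>_def yr_def power2_eq_square by (simp add: powr_divide powr_mult)
        have xk: "x k = cc x y k + \<beta>" using k by (simp add: \<beta>_def)
        have sa: "cc x y k powr r + \<beta> powr r \<le> x k powr r"
          unfolding xk using superadd[OF ck \<beta> r] .
        have "cc xr yr k = x k powr r - (yr i)^2 / cc xr yr i" using k by (simp add: xr_def)
        then have "cc xr yr k \<ge> x k powr r - \<beta> powr r" using Y Yb by linarith
        then show ?thesis using sa unfolding xr_def yr_def by linarith
      qed
    qed
  qed
qed

lemma psd_pow:
  assumes r: "r \<ge> 1" and pc: "psd_cond n x y" and xn: "\<forall>i<n. x i \<ge> 0"
    and yn: "\<forall>i. i + 2 < n \<longrightarrow> y i \<ge> 0"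
  shows "psd_cond n (\<lambda>i. x i powr r) (\<lambda>i. y i powr r)"
  unfolding psd_cond_def
proof (intro allI impI conjI)
  fix k assume k: "k < n"
  have h: "cc (\<lambda>i. x i powr r) (\<lambda>i. y i powr r) k \<ge> cc x y k powr r"
    using cc_pow[OF assms k] .
  then show "cc (\<lambda>i. x i powr r) (\<lambda>i. y i powr r) k \<ge> 0" by (meson order_trans powr_ge_zero)
  assume k2: "k + 2 < n" and c0: "cc (\<lambda>i. x i powr r) (\<lambda>i. y i powr r) k = 0"
  then have "cc x y k powr r \<le> 0" using h by simp
  then have "cc x y k = 0" by (metis powr_gt_zero not_le)
  then have "y k = 0" using pc k k2 by (simp add: psd_cond_def)
  then show "y k powr r = 0" by simp
qed

lemma pd_pow:
  assumes r: "r \<ge> 1" and pc: "pd_cond n x y" and xn: "\<forall>i<n. x i \<ge> 0"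
    and yn: "\<forall>i. i + 2 < n \<longrightarrow> y i \<ge> 0"
  shows "pd_cond n (\<lambda>i. x i powr r) (\<lambda>i. y i powr r)"
  unfolding pd_cond_def
proof (intro allI impI)
  fix k assume k: "k < n"
  have pc': "psd_cond n x y" using pc by (auto simp: psd_cond_def pd_cond_def less_imp_le)
  have h: "cc (\<lambda>i. x i powr r) (\<lambda>i. y i powr r) k \<ge> cc x y k powr r"
    using cc_pow[OF r pc' xn yn k] .
  have "cc x y k > 0" using pc k by (simp add: pd_cond_def)
  then have "cc x y k powr r > 0" by simp
  then show "cc (\<lambda>i. x i powr r) (\<lambda>i. y i powr r) k > 0" using h by linarith
qed


lemma agree_quad: "(\<forall>i<n. \<forall>j<n. A i j = B i j) \<Longrightarrow> quad_form n A v = quad_form n B v"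
  unfolding quad_form_def by (intro sum.cong refl) auto

lemma agree_sym: "(\<forall>i<n. \<forall>j<n. A i j = B i j) \<Longrightarrow> sym_mat n A = sym_mat n B"
  unfolding sym_mat_def by auto

lemma agree_psd: "(\<forall>i<n. \<forall>j<n. A i j = B i j) \<Longrightarrow> pos_semidef n A = pos_semidef n B"
  unfolding pos_semidef_def using agree_quad agree_sym by metis

lemma agree_pd: "(\<forall>i<n. \<forall>j<n. A i j = B i j) \<Longrightarrow> pos_def n A = pos_def n B"
  unfolding pos_def_def using agree_quad agree_sym by metis

lemma pd_imp_psd: "pos_def n A \<Longrightarrow> pos_semidef n A"
  unfolding pos_def_def pos_semidef_def
proof (intro conjI allI)
  fix v assume h: "sym_mat n A \<and> (\<forall>v. (\<exists>i<n. v i \<noteq> 0) \<longrightarrow> 0 < quad_form n A v)"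
  show "0 \<le> quad_form n A v"
  proof (cases "\<exists>i<n. v i \<noteq> 0")
    case True then show ?thesis using h less_imp_le by blast
  next
    case False then show ?thesis by (simp add: quad_form_def)
  qed
qed (simp)

lemma gap2_gm: "gap2_mat n P \<Longrightarrow> \<exists>x y. (\<forall>i<n. x i \<ge> 0) \<and> (\<forall>i. i + 2 < n \<longrightarrow> y i \<ge> 0)
   \<and> (\<forall>i<n. \<forall>j<n. P i j = gm x y i j)"
  unfolding gap2_mat_def gm_def by blast

lemma had_agree: "(\<forall>i<n. \<forall>j<n. P i j = gm x y i j) \<Longrightarrow>
   (\<forall>i<n. \<forall>j<n. hadamard_pow P r i j = gm (\<lambda>i. x i powr r) (\<lambda>i. y i powr r) i j)"
  unfolding hadamard_pow_def gm_def by auto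

lemma cc_ex: "cc (\<lambda>_. 1) (\<lambda>i. if i = 0 \<or> i = 2 then c else 0) k
   = (if k = 2 then 1 - c^2 else if k = 4 then 1 - c^2/(1-c^2) else 1)"
proof (cases "k \<ge> 5")
  case True
  define i where "i = k - 2"
  have i: "k = Suc (Suc i)" "i \<ge> 3" using True by (auto simp: i_def)
  then show ?thesis by simp
next
  case False
  then have "k = 0 \<or> k = 1 \<or> k = 2 \<or> k = 3 \<or> k = 4" by auto
  then show ?thesis by (auto simp: eval_nat_numeral)
qed


lemma cex:
  fixes r :: real
  assumes n: "n \<ge> 5" and r0: "r > 0" and r1: "r < 1"
  shows "\<exists>P. gap2_mat n P \<and> pos_def n P \<and> \<not> pos_semidef n (hadamard_pow P r)"
proof -
  define s where "s = (1 + 1/r) / 2"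
  have s1: "s > 1" using r0 r1 by (simp add: s_def field_simps)
  have sr: "s * r < 1" "s * r > 0" using r0 r1 by (simp_all add: s_def field_simps add_pos_pos)
  define a :: real where "a = 2 powr (- s / 2)"
  have a0: "a > 0" by (simp add: a_def)
  have a2: "a^2 = 2 powr (- s)"
    unfolding a_def power2_eq_square by (simp add: powr_add[symmetric])
  have b: "a^2 < 1/2"
  proof -
    have "2 powr (- s) < 2 powr (-1::real)" using s1 by (intro powr_less_mono) auto
    then show ?thesis using a2 by (simp add: powr_minus)
  qed
  have e: "(a powr r)^2 = 2 powr (- (s * r))"
    unfolding a_def power2_eq_square by (simp add: powr_powr powr_add[symmetric] mult.commute)
  have e1: "(a powr r)^2 > 1/2"
  proof -
    have "2 powr (-1::real) < 2 powr (- (s * r))" using sr by (intro powr_less_mono) auto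
    then show ?thesis using e by (simp add: powr_minus)
  qed
  have e2: "(a powr r)^2 < 1"
  proof -
    have "2 powr (- (s * r)) < 2 powr (0::real)" using sr by (intro powr_less_mono) auto
    then show ?thesis using e by simp
  qed
  define x0 :: "nat \<Rightarrow> real" where "x0 = (\<lambda>_. 1)"
  define ya where "ya = (\<lambda>i::nat. if i = 0 \<or> i = 2 then a else 0)"
  define yb where "yb = (\<lambda>i::nat. if i = 0 \<or> i = 2 then a powr r else 0)"
  have g: "gap2_mat n (gm x0 ya)" unfolding gap2_mat_def
    by (rule exI[of _ x0], rule exI[of _ ya]) (auto simp: x0_def ya_def gm_def a0 less_imp_le)
  have pdc: "pd_cond n x0 ya" unfolding pd_cond_def x0_def ya_def cc_ex
  proof (intro allI impI)
    fix k :: nat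
    have "1 - a^2 > 0" using b by simp
    moreover have "1 - a^2 / (1 - a^2) > 0" using b by (simp add: field_simps)
    ultimately show "0 < (if k = 2 then 1 - a^2 else if k = 4 then 1 - a^2 / (1 - a^2) else 1)" by simp
  qed
  have pd: "pos_def n (gm x0 ya)" using pdc pd_char n by simp
  have ha: "\<forall>i<n. \<forall>j<n. hadamard_pow (gm x0 ya) r i j = gm x0 yb i j"
  proof -
    have "(\<lambda>i. x0 i powr r) = x0" by (simp add: x0_def)
    moreover have "(\<lambda>i. ya i powr r) = yb" by (auto simp: ya_def yb_def)
    ultimately show ?thesis using had_agree[of n "gm x0 ya" x0 ya r] by simp
  qed
  have "\<not> psd_cond n x0 yb"
  proof
    assume "psd_cond n x0 yb"
    then have "cc x0 yb 4 \<ge> 0" using n by (simp add: psd_cond_def)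
    then have "1 - (a powr r)^2 / (1 - (a powr r)^2) \<ge> 0" unfolding x0_def yb_def cc_ex by simp
    moreover have "1 - (a powr r)^2 / (1 - (a powr r)^2) < 0" using e1 e2 by (simp add: field_simps)
    ultimately show False by simp
  qed
  then have "\<not> pos_semidef n (hadamard_pow (gm x0 ya) r)"
    using agree_psd[OF ha] psd_char n by simp
  then show ?thesis using g pd by blast
qed

theorem theorem1p3:
  fixes n :: nat and r :: real
  assumes "n \<ge> 5" and "r > 0"
  shows "((\<forall>P. gap2_mat n P \<and> pos_def n P \<longrightarrow> pos_def n (hadamard_pow P r)) \<longleftrightarrow> r \<ge> 1)
       \<and> ((\<forall>P. gap2_mat n P \<and> pos_semidef n P \<longrightarrow> pos_semidef n (hadamard_pow P r)) \<longleftrightarrow> r \<ge> 1)"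
proof -
  have n2: "n \<ge> 2" using assms(1) by simp
  have f1: "pos_def n (hadamard_pow P r)" if r: "r \<ge> 1" and P: "gap2_mat n P" "pos_def n P" for P
  proof -
    obtain x y where xy: "\<forall>i<n. x i \<ge> 0" "\<forall>i. i + 2 < n \<longrightarrow> y i \<ge> 0"
      "\<forall>i<n. \<forall>j<n. P i j = gm x y i j" using gap2_gm[OF P(1)] by blast
    have "pd_cond n x y" using P(2) agree_pd[OF xy(3)] pd_char n2 by simp
    then have "pd_cond n (\<lambda>i. x i powr r) (\<lambda>i. y i powr r)" using pd_pow r xy by blast
    then show ?thesis using agree_pd[OF had_agree[OF xy(3)]] pd_char n2 by simp
  qed
  have f2: "pos_semidef n (hadamard_pow P r)" if r: "r \<ge> 1" and P: "gap2_mat n P" "pos_semidef n P" for P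
  proof -
    obtain x y where xy: "\<forall>i<n. x i \<ge> 0" "\<forall>i. i + 2 < n \<longrightarrow> y i \<ge> 0"
      "\<forall>i<n. \<forall>j<n. P i j = gm x y i j" using gap2_gm[OF P(1)] by blast
    have "psd_cond n x y" using P(2) agree_psd[OF xy(3)] psd_char n2 by simp
    then have "psd_cond n (\<lambda>i. x i powr r) (\<lambda>i. y i powr r)" using psd_pow r xy by blast
    then show ?thesis using agree_psd[OF had_agree[OF xy(3)]] psd_char n2 by simp
  qed
  have b1: "r \<ge> 1" if "\<forall>P. gap2_mat n P \<and> pos_def n P \<longrightarrow> pos_def n (hadamard_pow P r)"
  proof (rule ccontr)
    assume "\<not> r \<ge> 1"
    then obtain P where "gap2_mat n P" "pos_def n P" "\<not> pos_semidef n (hadamard_pow P r)"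
      using cex assms by (meson not_le)
    then show False using that pd_imp_psd by blast
  qed
  have b2: "r \<ge> 1" if "\<forall>P. gap2_mat n P \<and> pos_semidef n P \<longrightarrow> pos_semidef n (hadamard_pow P r)"
  proof (rule ccontr)
    assume "\<not> r \<ge> 1"
    then obtain P where "gap2_mat n P" "pos_def n P" "\<not> pos_semidef n (hadamard_pow P r)"
      using cex assms by (meson not_le)
    then show False using that pd_imp_psd by blast
  qed
  show ?thesis using f1 f2 b1 b2 by blast
qed

end
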